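(* Let $\sigma>0$, $n\ge1$, let $X_1,\dots,X_n$ be i.i.d. $N(0,1)$, $Y_j=e^{X_j/\sigma-1/(2\sigma^2)}$ and $\bar Y_n=\frac1n\sum_{j=1}^nY_j$. Define $\epsilon_n(h)$ for real $h$ by $$\mathbf P[\bar Y_n<h]=\Phi\Big((h-1)\sqrt{\tfrac{n}{e^{1/\sigma^2}-1}}\Big)+\epsilon_n(h).$$ Then for all $h$, $$|\epsilon_n(h)|\le \epsilon_{\mathrm{BE}}(n):=B\cdot\frac{\big(1-2\Phi(-\frac{5}{2\sigma})\big)e^{3/\sigma^2}-3\big(1-2\Phi(-\frac{3}{2\sigma})\big)e^{1/\sigma^2}+4\big(1-2\Phi(-\frac{1}{2\sigma})\big)}{\sqrt n\,(e^{1/\sigma^2}-1)^{3/2}},$$ and moreover $$\epsilon_{\mathrm{BE}}(n)\le B\sqrt{\tfrac{8}{\pi}}\,n^{-1/2}\Big(1+\frac{46.115+0.375\,e^{1/\sigma^2}+5.625\,e^{3/\sigma^2}}{\sigma^2}\Big)$$ and $$\epsilon_{\mathrm{BE}}(n)\le B\cdot\frac{e^{3/(2\sigma^2)}}{\sqrt n}\cdot\frac{1+4e^{-3/\sigma^2}}{(1-e^{-1/\sigma^2})^{3/2}}.$$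
   Context: $\Phi$ denotes the standard normal cumulative distribution function. $B$ denotes the universal Berry–Esseen constant for i.i.d. sums: a constant such that for every i.i.d. sequence $Z_1,Z_2,\dots$ with finite third moment, variance $s^2>0$ and $r^3=\mathbb E|Z_1-\mathbb EZ_1|^3$, the distribution function $F_n$ of $\sum_{j\le n}(Z_j-\mathbb EZ_j)/(s\sqrt n)$ satisfies $\sup_x|F_n(x)-\Phi(x)|\le B r^3/(\sqrt n s^3)$ (one may take $B=0.4748$). *)

theory Defs
  imports "HOL-Probability.Probability"
begin

definition Phi :: "real \<Rightarrow> real" where
  "Phi x = measure (density lborel std_normal_density) {..x}"

definition berry_esseen_const :: "real \<Rightarrow> bool" where
  "berry_esseen_const B \<longleftrightarrow>
    (\<forall>(\<mu>::real measure) (n::nat).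
       prob_space \<mu> \<and> sets \<mu> = sets borel \<and> integrable \<mu> (\<lambda>z. \<bar>z\<bar> ^ 3) \<and> 1 \<le> n \<and>
       (\<integral>z. (z - (\<integral>y. y \<partial>\<mu>))\<^sup>2 \<partial>\<mu>) > 0 \<longrightarrow>
       (let m = (\<integral>y. y \<partial>\<mu>);
            s = sqrt (\<integral>z. (z - m)\<^sup>2 \<partial>\<mu>);
            r3 = (\<integral>z. \<bar>z - m\<bar> ^ 3 \<partial>\<mu>);
            P = PiM {..<n} (\<lambda>_. \<mu>)
        in \<forall>x::real.
             \<bar>measure P {\<omega> \<in> space P. (\<Sum>j<n. \<omega> j - m) / (s * sqrt (real n)) \<le> x} - Phi x\<bar>
               \<le> B * r3 / (sqrt (real n) * s ^ 3)))"

definition eps_BE :: "real \<Rightarrow> real \<Rightarrow> nat \<Rightarrow> real" where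
  "eps_BE B \<sigma> n = B *
     ((1 - 2 * Phi (- 5 / (2 * \<sigma>))) * exp (3 / \<sigma>\<^sup>2)
      - 3 * (1 - 2 * Phi (- 3 / (2 * \<sigma>))) * exp (1 / \<sigma>\<^sup>2)
      + 4 * (1 - 2 * Phi (- 1 / (2 * \<sigma>))))
     / (sqrt (real n) * (exp (1 / \<sigma>\<^sup>2) - 1) powr (3 / 2))"

end

theory Submission
  imports Defs
begin

lemma Phi_int: "Phi x = (\<integral>y. indicator {..x} y * std_normal_density y \<partial>lborel)"
proof -
  have "Phi x = integral\<^sup>L (density lborel std_normal_density) (indicator {..x})"
    unfolding Phi_def by simp
  also have "\<dots> = (\<integral>y. std_normal_density y *\<^sub>R indicator {..x} y \<partial>lborel)"
    by (subst integral_density) auto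
  finally show ?thesis by (simp add: mult.commute)
qed

lemma phi_exp: "std_normal_density x * exp (b * x) = exp (b\<^sup>2/2) * normal_density b 1 x"
proof -
  have "std_normal_density x * exp (b * x) = (1 / sqrt (2 * pi)) * exp (b*x - x\<^sup>2/2)"
    unfolding std_normal_density_def exp_diff by (simp add: exp_minus field_simps)
  moreover have "exp (b\<^sup>2/2) * exp (-(x - b)\<^sup>2 / 2) = exp (b*x - x\<^sup>2/2)"
    by (simp only: exp_add[symmetric]) (simp add: power2_eq_square field_simps)
  ultimately show ?thesis unfolding normal_density_def by simp
qed
   
lemma hb_full: "has_bochner_integral lborel (\<lambda>x. std_normal_density x * exp (b * x)) (exp (b\<^sup>2/2))"
proof -
  have "has_bochner_integral lborel (\<lambda>x. exp (b\<^sup>2/2) * normal_density b 1 x) (exp (b\<^sup>2/2) * 1)"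
    by (intro has_bochner_integral_mult_right) (simp add: has_bochner_integral_iff)
  then show ?thesis by (simp add: phi_exp)
qed

lemma int_trunc: "integrable lborel (\<lambda>x. indicator A x * (std_normal_density x * exp (b * x)))"
  if "A \<in> sets borel" 
  using integrable_mult_indicator[OF that[folded sets_lborel] hb_full[of b, unfolded has_bochner_integral_iff, THEN conjunct1]]
  by simp

lemma hb_trunc: "has_bochner_integral lborel (\<lambda>x. indicator {..c} x * (std_normal_density x * exp (b * x))) (exp (b\<^sup>2/2) * Phi (c - b))"
proof -
  have "(\<integral>x. indicator {..c} x * (std_normal_density x * exp (b * x)) \<partial>lborel)
     = \<bar>1\<bar> *\<^sub>R (\<integral>x. indicator {..c} (b + 1 * x) * (std_normal_density (b + 1*x) * exp (b * (b + 1*x))) \<partial>lborel)"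
    by (rule lborel_integral_real_affine) simp
  also have "\<dots> = (\<integral>x. exp (b\<^sup>2/2) * (indicator {..c-b} x * std_normal_density x) \<partial>lborel)"
    unfolding abs_one scaleR_one mult_1
    apply (rule Bochner_Integration.integral_cong[OF refl])
    apply (subst phi_exp)
    apply (simp add: normal_density_def indicator_def)
    done
  also have "\<dots> = exp (b\<^sup>2/2) * Phi (c - b)" by (simp add: Phi_int)
  finally show ?thesis using int_trunc[of "{..c}" b] by (simp add: has_bochner_integral_iff)
qed

lemma int_phi_ind: "A \<in> sets borel \<Longrightarrow> integrable lborel (\<lambda>x. indicator A x * std_normal_density x)"
  using int_trunc[of A 0] by simp

lemma int_phi: "integrable lborel std_normal_density"
  by simp

lemma Phi_lt: "Phi c = (\<integral>y. indicator {..<c} y * std_normal_density y \<partial>lborel)"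
  unfolding Phi_int
proof (rule integral_cong_AE)
  show "AE x in lborel. indicator {..c} x * std_normal_density x = indicator {..<c} x * std_normal_density x"
    using AE_lborel_singleton[of c] by eventually_elim (auto simp: indicator_def)
qed simp_all

lemma Phi_sym: "Phi (-c) = 1 - Phi c"
proof -
  have "Phi (-c) = \<bar>-1\<bar> *\<^sub>R (\<integral>x. indicator {..-c} (0 + -1 * x) * std_normal_density (0 + -1*x) \<partial>lborel)"
    unfolding Phi_int by (rule lborel_integral_real_affine[where f="\<lambda>y. indicator {..-c} y * std_normal_density y"]) simp
  also have "\<dots> = (\<integral>x. indicator {c..} x * std_normal_density x \<partial>lborel)"
  proof -
    have "\<And>x. indicator {..-c} (0 + -1*x) * std_normal_density (0 + -1*x) = indicator {c..} x * std_normal_density x"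
      by (auto simp: indicator_def std_normal_density_def)
    then show ?thesis by simp
  qed
  finally have 1: "Phi (-c) = (\<integral>x. indicator {c..} x * std_normal_density x \<partial>lborel)" .
  have "Phi c + Phi (-c) = (\<integral>x. indicator {..<c} x * std_normal_density x + indicator {c..} x * std_normal_density x \<partial>lborel)"
    unfolding 1 Phi_lt[of c] by (rule Bochner_Integration.integral_add[symmetric, OF int_phi_ind int_phi_ind]) simp_all
  also have "\<dots> = (\<integral>x. std_normal_density x \<partial>lborel)"
    by (rule Bochner_Integration.integral_cong) (auto simp: indicator_def)
  finally show ?thesis by simp
qed

lemma Phi_diff: "y \<le> x \<Longrightarrow> Phi x - Phi y = (\<integral>z. indicator {y<..x} z * std_normal_density z \<partial>lborel)"
  unfolding Phi_int
  apply (subst Bochner_Integration.integral_diff[symmetric, OF int_phi_ind int_phi_ind])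
    apply simp
   apply simp
  apply (rule Bochner_Integration.integral_cong)
   apply (auto simp: indicator_def)
  done

lemma phi_le1: "std_normal_density x \<le> 1"
proof -
  have "exp (- (x\<^sup>2 / 2)) \<le> 1" by simp
  moreover have "1 \<le> sqrt (2 * pi)" using pi_gt3 by (simp add: real_le_rsqrt)
  ultimately have "exp (- (x\<^sup>2 / 2)) \<le> sqrt (2 * pi)" by linarith
  then show ?thesis unfolding std_normal_density_def
    by (simp add: field_simps)
qed

lemma Phi_mono: "y \<le> x \<Longrightarrow> Phi y \<le> Phi x"
proof -
  assume yx: "y \<le> x"
  have "0 \<le> (\<integral>z. indicator {y<..x} z * std_normal_density z \<partial>lborel)"
    by (rule Bochner_Integration.integral_nonneg) (simp add: indicator_def)
  then show ?thesis using Phi_diff[OF yx] by linarith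
qed

lemma Phi_lip: "y \<le> x \<Longrightarrow> Phi x - Phi y \<le> x - y"
proof -
  assume yx: "y \<le> x"
  have hb: "has_bochner_integral lborel (\<lambda>z. 1 * indicator {y..x} z) (x - y)"
    using has_bochner_integral_FTC_Icc_real[OF yx, of "\<lambda>z. z" "\<lambda>_. 1"]
    by (auto intro!: derivative_eq_intros)
  have "Phi x - Phi y \<le> (\<integral>z. 1 * indicator {y..x} z \<partial>lborel)"
    unfolding Phi_diff[OF yx]
    apply (rule integral_mono)
    using hb int_phi_ind[of "{y<..x}"] phi_le1 by (auto simp: has_bochner_integral_iff indicator_def)
  then show ?thesis using hb by (simp add: has_bochner_integral_iff)
qed

lemma Phi_nonneg: "0 \<le> Phi x"
  unfolding Phi_int by (auto intro!: Bochner_Integration.integral_nonneg simp: indicator_def)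

lemma Phi_le1: "Phi x \<le> 1"
  using Phi_sym[of x] Phi_nonneg[of "-x"] by simp

lemma Phi_neg_le_half: "0 \<le> x \<Longrightarrow> Phi (-x) \<le> 1/2"
  using Phi_sym[of x] Phi_mono[of "-x" x] by simp

lemma G_int: "0 \<le> x \<Longrightarrow> 1 - 2 * Phi (-x) = (\<integral>z. std_normal_density z * indicator {-x..x} z \<partial>lborel)"
proof -
  assume x: "0 \<le> x"
  have "1 - 2 * Phi (-x) = Phi x - Phi (-x)" using Phi_sym[of x] by simp
  also have "\<dots> = (\<integral>z. indicator {..x} z * std_normal_density z - indicator {..<-x} z * std_normal_density z \<partial>lborel)"
    unfolding Phi_int[of x] Phi_lt[of "-x"]
    by (rule Bochner_Integration.integral_diff[symmetric, OF int_phi_ind int_phi_ind]) simp_all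
  also have "\<dots> = (\<integral>z. std_normal_density z * indicator {-x..x} z \<partial>lborel)"
    using x by (intro Bochner_Integration.integral_cong) (auto simp: indicator_def)
  finally show ?thesis .
qed

lemma exp_neg_upper: "0 \<le> (u::real) \<Longrightarrow> exp (-u) \<le> 1 - u + u\<^sup>2/2"
proof -
  assume u: "0 \<le> u"
  have e: "1 + u + u\<^sup>2/2 \<le> exp u" using exp_lower_Taylor_quadratic[OF u] .
  have q: "1 - u + u\<^sup>2/2 = ((u - 1)\<^sup>2 + 1)/2" by (simp add: power2_eq_square field_simps)
  have p: "0 < 1 - u + u\<^sup>2/2" unfolding q by (simp add: add_nonneg_pos)
  have "1 \<le> (1 - u + u\<^sup>2/2) * (1 + u + u\<^sup>2/2)"
    using u by (simp add: algebra_simps power2_eq_square power4_eq_xxxx) 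
  also have "\<dots> \<le> (1 - u + u\<^sup>2/2) * exp u" using p e by (intro mult_left_mono) auto
  finally show ?thesis by (simp add: exp_minus field_simps)
qed

lemma G_bounds:
  assumes x: "0 \<le> x"
  shows "2 / sqrt (2*pi) * (x - x^3/6) \<le> 1 - 2 * Phi (-x)"
    and "1 - 2 * Phi (-x) \<le> 2 / sqrt (2*pi) * (x - x^3/6 + x^5/40)"
proof -
  define k where "k = 1 / sqrt (2*pi)"
  have k: "0 < k" unfolding k_def by simp
  have phi: "std_normal_density y = k * exp (- (y\<^sup>2/2))" for y
    unfolding k_def std_normal_density_def by simp
  have hl: "has_bochner_integral lborel (\<lambda>y. k * (1 - y\<^sup>2/2) * indicator {-x..x} y)
      ((\<lambda>y. k * (y - y^3/6)) x - (\<lambda>y. k * (y - y^3/6)) (-x))"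
    using x by (intro has_bochner_integral_FTC_Icc_real) (auto intro!: derivative_eq_intros simp: algebra_simps power2_eq_square)
  have hu: "has_bochner_integral lborel (\<lambda>y. k * (1 - y\<^sup>2/2 + y^4/8) * indicator {-x..x} y)
      ((\<lambda>y. k * (y - y^3/6 + y^5/40)) x - (\<lambda>y. k * (y - y^3/6 + y^5/40)) (-x))"
    using x by (intro has_bochner_integral_FTC_Icc_real) (auto intro!: derivative_eq_intros simp: algebra_simps power2_eq_square power4_eq_xxxx)
  have ig: "integrable lborel (\<lambda>z. std_normal_density z * indicator {-x..x} z)"
    using int_phi_ind[of "{-x..x}"] by (simp add: mult.commute)
  have "(\<integral>y. k * (1 - y\<^sup>2/2) * indicator {-x..x} y \<partial>lborel) \<le> (\<integral>z. std_normal_density z * indicator {-x..x} z \<partial>lborel)"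
  proof (rule integral_mono)
    fix y :: real
    have "1 - y\<^sup>2/2 \<le> exp (- (y\<^sup>2/2))" using exp_ge_add_one_self[of "- (y\<^sup>2/2)"] by simp
    then show "k * (1 - y\<^sup>2/2) * indicator {-x..x} y \<le> std_normal_density y * indicator {-x..x} y"
      using k unfolding phi by (auto simp: indicator_def)
  qed (use hl ig in \<open>auto simp: has_bochner_integral_iff\<close>)
  moreover have "(\<integral>y. k * (1 - y\<^sup>2/2) * indicator {-x..x} y \<partial>lborel) = 2 / sqrt (2*pi) * (x - x^3/6)"
    using has_bochner_integral_integral_eq[OF hl] by (simp add: k_def algebra_simps)
  ultimately show "2 / sqrt (2*pi) * (x - x^3/6) \<le> 1 - 2 * Phi (-x)"
    unfolding G_int[OF x] by simp
  have "(\<integral>z. std_normal_density z * indicator {-x..x} z \<partial>lborel) \<le> (\<integral>y. k * (1 - y\<^sup>2/2 + y^4/8) * indicator {-x..x} y \<partial>lborel)"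
  proof (rule integral_mono)
    fix y :: real
    have "exp (- (y\<^sup>2/2)) \<le> 1 - y\<^sup>2/2 + (y\<^sup>2/2)\<^sup>2/2" by (rule exp_neg_upper) simp
    also have "\<dots> = 1 - y\<^sup>2/2 + y^4/8" by (simp add: power2_eq_square power4_eq_xxxx)
    finally show "std_normal_density y * indicator {-x..x} y \<le> k * (1 - y\<^sup>2/2 + y^4/8) * indicator {-x..x} y"
      using k unfolding phi by (auto simp: indicator_def)
  qed (use hu ig in \<open>auto simp: has_bochner_integral_iff\<close>)
  moreover have "(\<integral>y. k * (1 - y\<^sup>2/2 + y^4/8) * indicator {-x..x} y \<partial>lborel) = 2 / sqrt (2*pi) * (x - x^3/6 + x^5/40)"
    using has_bochner_integral_integral_eq[OF hu] by (simp add: k_def algebra_simps)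
  ultimately show "1 - 2 * Phi (-x) \<le> 2 / sqrt (2*pi) * (x - x^3/6 + x^5/40)"
    unfolding G_int[OF x] by simp
qed

lemma f2_neg: "0 \<le> (u::real) \<Longrightarrow>
  (-1375/4 - 16530 * u - 40590 * u\<^sup>2) * exp (12*u) - (84 + 168*u + 384*u\<^sup>2) * exp (4*u) - 147563/25 \<le> 0"
proof -
  assume u: "0 \<le> u"
  have s2: "0 \<le> u\<^sup>2" by simp
  have "(-1375/4 - 16530 * u - 40590 * u\<^sup>2) * exp (12*u) \<le> 0"
    by (intro mult_nonpos_nonneg) (use u s2 in linarith, simp)
  moreover have "0 \<le> (84 + 168*u + 384*u\<^sup>2) * exp (4*u)"
    by (intro mult_nonneg_nonneg) (use u s2 in linarith, simp)
  ultimately show ?thesis by linarith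
qed

lemma f1_neg: "0 \<le> (u::real) \<Longrightarrow>
  (235/6 - 813.75 * u - 3382.5 * u\<^sup>2) * exp (12*u) - (22.5 - 6*u + 96*u\<^sup>2) * exp (4*u) + (-50/3 - 5902.52*u) \<le> 0"
proof -
  assume u: "0 \<le> u"
  let ?f = "\<lambda>u::real. (235/6 - 813.75 * u - 3382.5 * u\<^sup>2) * exp (12*u) - (22.5 - 6*u + 96*u\<^sup>2) * exp (4*u) + (-50/3 - 5902.52*u)"
  have "?f u \<le> ?f 0"
  proof (rule DERIV_nonpos_imp_nonincreasing[OF u])
    fix x :: real assume x: "0 \<le> x"
    show "\<exists>y. DERIV ?f x :> y \<and> y \<le> 0"
    proof (intro exI conjI)
      show "DERIV ?f x :> (-1375/4 - 16530 * x - 40590 * x\<^sup>2) * exp (12*x) - (84 + 168*x + 384*x\<^sup>2) * exp (4*x) - 147563/25"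
        by (rule derivative_eq_intros refl | simp)+ (simp add: algebra_simps power2_eq_square)
      show "(-1375/4 - 16530 * x - 40590 * x\<^sup>2) * exp (12*x) - (84 + 168*x + 384*x\<^sup>2) * exp (4*x) - 147563/25 \<le> 0"
        using f2_neg[OF x] .
    qed
  qed
  then show ?thesis by simp
qed

lemma f_neg: "0 \<le> (u::real) \<Longrightarrow>
  (5 - 125/6 * u - 281.875 * u\<^sup>2) * exp (12*u) - (9 - 13.5*u + 24*u\<^sup>2) * exp (4*u) + (4 - 50/3 * u - 2951.26 * u\<^sup>2) \<le> 0"
proof -
  assume u: "0 \<le> u"
  let ?f = "\<lambda>u::real. (5 - 125/6 * u - 281.875 * u\<^sup>2) * exp (12*u) - (9 - 13.5*u + 24*u\<^sup>2) * exp (4*u) + (4 - 50/3 * u - 2951.26 * u\<^sup>2)"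
  have "?f u \<le> ?f 0"
  proof (rule DERIV_nonpos_imp_nonincreasing[OF u])
    fix x :: real assume x: "0 \<le> x"
    show "\<exists>y. DERIV ?f x :> y \<and> y \<le> 0"
    proof (intro exI conjI)
      show "DERIV ?f x :> (235/6 - 813.75 * x - 3382.5 * x\<^sup>2) * exp (12*x) - (22.5 - 6*x + 96*x\<^sup>2) * exp (4*x) + (-50/3 - 5902.52*x)"
        by (rule derivative_eq_intros refl | simp)+ (simp add: algebra_simps power2_eq_square)
      show "(235/6 - 813.75 * x - 3382.5 * x\<^sup>2) * exp (12*x) - (22.5 - 6*x + 96*x\<^sup>2) * exp (4*x) + (-50/3 - 5902.52*x) \<le> 0"
        using f1_neg[OF x] .
    qed
  qed
  then show ?thesis by simp
qed

lemma Q_id: "(5*a - (5*a)^3/6 + (5*a)^5/40)*E3 - 3*(3*a - (3*a)^3/6)*E1 + 4*(a - a^3/6 + a^5/40)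
  = 16*a^3*(1 + (46.115 + 0.375*E1 + 5.625*E3)*(4*a\<^sup>2))
    + a*((5 - 125/6*(a\<^sup>2) - 281.875*(a\<^sup>2)\<^sup>2)*E3 - (9 - 13.5*(a\<^sup>2) + 24*(a\<^sup>2)\<^sup>2)*E1 + (4 - 50/3*(a\<^sup>2) - 2951.26*(a\<^sup>2)\<^sup>2))"
  for a E1 E3 :: real
  by (simp add: algebra_simps power2_eq_square power3_eq_cube power4_eq_xxxx eval_nat_numeral)

lemma core2:
  fixes a k G5 G3 G1 :: real
  assumes a: "0 < a" and k: "0 < k"
    and g5: "G5 \<le> k * (5*a - (5*a)^3/6 + (5*a)^5/40)"
    and g3: "k * (3*a - (3*a)^3/6) \<le> G3"
    and g1: "G1 \<le> k * (a - a^3/6 + a^5/40)"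
  shows "G5 * exp (3*(4*a\<^sup>2)) - 3 * G3 * exp (4*a\<^sup>2) + 4 * G1
     \<le> k * (16*a^3*(1 + (46.115 + 0.375*exp (4*a\<^sup>2) + 5.625*exp (3*(4*a\<^sup>2)))*(4*a\<^sup>2)))"
proof -
  define E1 where "E1 = exp (4*a\<^sup>2)"
  define E3 where "E3 = exp (3*(4*a\<^sup>2))"
  have E: "0 < E1" "0 < E3" unfolding E1_def E3_def by simp_all
  have "G5 * E3 \<le> k * (5*a - (5*a)^3/6 + (5*a)^5/40) * E3" using g5 E by (intro mult_right_mono) auto
  moreover have "k * (3*a - (3*a)^3/6) * E1 \<le> G3 * E1" using g3 E by (intro mult_right_mono) auto
  ultimately have "G5 * E3 - 3 * G3 * E1 + 4 * G1 \<le> k * ((5*a - (5*a)^3/6 + (5*a)^5/40)*E3 - 3*(3*a - (3*a)^3/6)*E1 + 4*(a - a^3/6 + a^5/40))"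
    using g1 by (simp add: algebra_simps)
  also have "(5*a - (5*a)^3/6 + (5*a)^5/40)*E3 - 3*(3*a - (3*a)^3/6)*E1 + 4*(a - a^3/6 + a^5/40) \<le> 16*a^3*(1 + (46.115 + 0.375*E1 + 5.625*E3)*(4*a\<^sup>2))"
  proof -
    have f: "(5 - 125/6*(a\<^sup>2) - 281.875*(a\<^sup>2)\<^sup>2)*exp (12*a\<^sup>2) - (9 - 13.5*(a\<^sup>2) + 24*(a\<^sup>2)\<^sup>2)*exp (4*a\<^sup>2) + (4 - 50/3*(a\<^sup>2) - 2951.26*(a\<^sup>2)\<^sup>2) \<le> 0"
      by (rule f_neg) simp
    have "a*((5 - 125/6*(a\<^sup>2) - 281.875*(a\<^sup>2)\<^sup>2)*E3 - (9 - 13.5*(a\<^sup>2) + 24*(a\<^sup>2)\<^sup>2)*E1 + (4 - 50/3*(a\<^sup>2) - 2951.26*(a\<^sup>2)\<^sup>2)) \<le> 0"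
      using f a unfolding E1_def E3_def by (intro mult_nonneg_nonpos) (auto simp: mult.assoc)
    then show ?thesis unfolding Q_id by linarith
  qed
  then have "k * ((5*a - (5*a)^3/6 + (5*a)^5/40)*E3 - 3*(3*a - (3*a)^3/6)*E1 + 4*(a - a^3/6 + a^5/40)) \<le> k * (16*a^3*(1 + (46.115 + 0.375*E1 + 5.625*E3)*(4*a\<^sup>2)))"
    using k by (intro mult_left_mono) auto
  finally show ?thesis unfolding E1_def E3_def .
qed

lemma exp_sq: "exp (u::real) ^ 2 = exp (2*u)"
  by (simp add: exp_double)
lemma exp_cube: "exp (u::real) ^ 3 = exp (3*u)"
  using exp_of_nat_mult[of 3 u] by simp

lemma id2: "std_normal_density x * (\<alpha> * exp (\<beta>*x) - 1)^2 =
   \<alpha>^2 * (std_normal_density x * exp ((2*\<beta>)*x)) - 2*\<alpha> * (std_normal_density x * exp (\<beta>*x)) + std_normal_density x * exp (0*x)"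
proof -
  have h0: "exp (\<beta>*x)^2 = exp ((2*\<beta>)*x)" by (simp add: exp_sq mult.assoc)
  have h: "(\<alpha> * exp (\<beta>*x) - 1)^2 = \<alpha>^2 * exp ((2*\<beta>)*x) - 2*\<alpha>*exp (\<beta>*x) + 1"
    unfolding h0[symmetric] by (simp add: power2_eq_square algebra_simps)
  show ?thesis unfolding h by (simp add: algebra_simps)
qed

lemma id3: "std_normal_density x * (\<alpha> * exp (\<beta>*x) - 1)^3 =
   \<alpha>^3 * (std_normal_density x * exp ((3*\<beta>)*x)) - 3*\<alpha>^2 * (std_normal_density x * exp ((2*\<beta>)*x))
   + 3*\<alpha> * (std_normal_density x * exp (\<beta>*x)) - std_normal_density x * exp (0*x)"
proof -
  have h0: "exp (\<beta>*x)^2 = exp ((2*\<beta>)*x)" by (simp add: exp_sq mult.assoc)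
  have h1: "exp (\<beta>*x)^3 = exp ((3*\<beta>)*x)" by (simp add: exp_cube mult.assoc)
  have h: "(\<alpha> * exp (\<beta>*x) - 1)^3 = \<alpha>^3 * exp ((3*\<beta>)*x) - 3*\<alpha>^2*exp ((2*\<beta>)*x) + 3*\<alpha>*exp (\<beta>*x) - 1"
    unfolding h0[symmetric] h1[symmetric] by (simp add: power3_eq_cube power2_eq_square algebra_simps)
  show ?thesis unfolding h by (simp add: algebra_simps)
qed

lemma hb3:
  "has_bochner_integral lborel (\<lambda>x. std_normal_density x * (\<alpha> * exp (\<beta>*x) - 1)^3)
     (\<alpha>^3 * exp ((3*\<beta>)\<^sup>2/2) - 3*\<alpha>^2 * exp ((2*\<beta>)\<^sup>2/2) + 3*\<alpha> * exp (\<beta>\<^sup>2/2) - exp (0\<^sup>2/2))"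
  unfolding id3
  by (intro has_bochner_integral_diff has_bochner_integral_add has_bochner_integral_mult_right hb_full)

lemma hb3t:
  "has_bochner_integral lborel (\<lambda>x. indicator {..c} x * (std_normal_density x * (\<alpha> * exp (\<beta>*x) - 1)^3))
     (\<alpha>^3 * (exp ((3*\<beta>)\<^sup>2/2) * Phi (c - 3*\<beta>)) - 3*\<alpha>^2 * (exp ((2*\<beta>)\<^sup>2/2) * Phi (c - 2*\<beta>))
      + 3*\<alpha> * (exp (\<beta>\<^sup>2/2) * Phi (c - \<beta>)) - exp (0\<^sup>2/2) * Phi (c - 0))"
proof -
  have e: "indicator {..c} x * (std_normal_density x * (\<alpha> * exp (\<beta>*x) - 1)^3) =
    \<alpha>^3 * (indicator {..c} x * (std_normal_density x * exp ((3*\<beta>)*x))) - 3*\<alpha>^2 * (indicator {..c} x * (std_normal_density x * exp ((2*\<beta>)*x)))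
   + 3*\<alpha> * (indicator {..c} x * (std_normal_density x * exp (\<beta>*x))) - indicator {..c} x * (std_normal_density x * exp (0*x))" for x
    unfolding id3 by (simp add: algebra_simps)
  show ?thesis unfolding e
    by (intro has_bochner_integral_diff has_bochner_integral_add has_bochner_integral_mult_right hb_trunc)
qed

lemma hb2:
  "has_bochner_integral lborel (\<lambda>x. std_normal_density x * (\<alpha> * exp (\<beta>*x) - 1)^2)
     (\<alpha>^2 * exp ((2*\<beta>)\<^sup>2/2) - 2*\<alpha> * exp (\<beta>\<^sup>2/2) + exp (0\<^sup>2/2))"
  unfolding id2
  by (intro has_bochner_integral_diff has_bochner_integral_add has_bochner_integral_mult_right hb_full)

lemma hb1:
  "has_bochner_integral lborel (\<lambda>x. std_normal_density x * (\<alpha> * exp (\<beta>*x))) (\<alpha> * exp (\<beta>\<^sup>2/2))"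
proof -
  have "(\<lambda>x. std_normal_density x * (\<alpha> * exp (\<beta>*x))) = (\<lambda>x. \<alpha> * (std_normal_density x * exp (\<beta>*x)))"
    by (simp add: algebra_simps)
  then show ?thesis by (simp add: has_bochner_integral_mult_right hb_full)
qed

lemma hb_abs3:
  "has_bochner_integral lborel (\<lambda>x. std_normal_density x * \<bar>\<alpha> * exp (\<beta>*x)\<bar>^3) (\<bar>\<alpha>\<bar>^3 * exp ((3*\<beta>)\<^sup>2/2))"
proof -
  have "(\<lambda>x. std_normal_density x * \<bar>\<alpha> * exp (\<beta>*x)\<bar>^3) = (\<lambda>x. \<bar>\<alpha>\<bar>^3 * (std_normal_density x * exp ((3*\<beta>)*x)))"
    by (simp add: abs_mult power_mult_distrib exp_cube algebra_simps)
  then show ?thesis using has_bochner_integral_mult_right[OF hb_full[of "3*\<beta>"], of "\<bar>\<alpha>\<bar>^3"] by simp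
qed

definition "gg \<sigma> = (\<lambda>x::real. exp (x/\<sigma> - 1/(2*\<sigma>\<^sup>2)))"
definition "mu \<sigma> = distr (density lborel std_normal_density) borel (gg \<sigma>)"

lemma gg_meas[measurable]: "gg \<sigma> \<in> borel_measurable borel"
  unfolding gg_def by measurable

lemma gg_eq: "\<sigma> \<noteq> 0 \<Longrightarrow> gg \<sigma> x = exp (-1/(2*\<sigma>\<^sup>2)) * exp ((1/\<sigma>)*x)"
  unfolding gg_def by (simp add: exp_add[symmetric] field_simps)

lemma int_mu: "h \<in> borel_measurable borel \<Longrightarrow> integral\<^sup>L (mu \<sigma>) h = (\<integral>x. std_normal_density x * h (gg \<sigma> x) \<partial>lborel)"
  unfolding mu_def
  by (simp add: integral_distr integral_density)

lemma int_mu_iff: "h \<in> borel_measurable borel \<Longrightarrow> integrable (mu \<sigma>) h \<longleftrightarrow> integrable lborel (\<lambda>x. std_normal_density x * h (gg \<sigma> x))"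
  unfolding mu_def
  by (simp add: integrable_distr_eq integrable_density)

lemma mu_prob: "prob_space (mu \<sigma>)"
  unfolding mu_def by (intro prob_space.prob_space_distr prob_space_normal_density) auto

lemma mu_sets: "sets (mu \<sigma>) = sets borel"
  unfolding mu_def by simp

lemma hbI: "has_bochner_integral M f x \<Longrightarrow> integrable M f"
  by (auto simp: has_bochner_integral_iff)

lemma mu_int3: "\<sigma> \<noteq> 0 \<Longrightarrow> integrable (mu \<sigma>) (\<lambda>z. \<bar>z\<bar>^3)"
proof -
  assume s: "\<sigma> \<noteq> 0"
  have "integrable lborel (\<lambda>x. std_normal_density x * \<bar>exp (-1/(2*\<sigma>\<^sup>2)) * exp ((1/\<sigma>)*x)\<bar>^3)"
    by (rule hbI[OF hb_abs3])
  then show ?thesis by (subst int_mu_iff) (simp_all add: gg_eq[OF s])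
qed

lemma mu_mean: "\<sigma> \<noteq> 0 \<Longrightarrow> (\<integral>y. y \<partial>mu \<sigma>) = 1"
  apply (subst int_mu, simp)
  apply (subst gg_eq, assumption)
  apply (subst has_bochner_integral_integral_eq[OF hb1])
  apply (simp add: field_simps power2_eq_square exp_minus)
  done

lemma mu_var: "\<sigma> \<noteq> 0 \<Longrightarrow> (\<integral>z. (z - 1)\<^sup>2 \<partial>mu \<sigma>) = exp (1/\<sigma>\<^sup>2) - 1"
  apply (subst int_mu, simp)
  apply (subst gg_eq, assumption)
  apply (subst has_bochner_integral_integral_eq[OF hb2])
  apply (simp only: exp_sq exp_add[symmetric])
  apply (simp add: field_simps power2_eq_square)
  apply (simp add: exp_minus)
  done

lemma mu_r3:
  assumes s: "\<sigma> > 0"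
  shows "(\<integral>z. \<bar>z - 1\<bar>^3 \<partial>mu \<sigma>) = (1 - 2 * Phi (- 5 / (2 * \<sigma>))) * exp (3 / \<sigma>\<^sup>2)
      - 3 * (1 - 2 * Phi (- 3 / (2 * \<sigma>))) * exp (1 / \<sigma>\<^sup>2)
      + 4 * (1 - 2 * Phi (- 1 / (2 * \<sigma>)))"
proof -
  define \<alpha> where "\<alpha> = exp (-1/(2*\<sigma>\<^sup>2))"
  define \<beta> where "\<beta> = 1/\<sigma>"
  define c where "c = 1/(2*\<sigma>)"
  have g: "gg \<sigma> x = \<alpha> * exp (\<beta> * x)" for x using gg_eq[of \<sigma> x] s by (simp add: \<alpha>_def \<beta>_def)
  have pw: "std_normal_density x * \<bar>gg \<sigma> x - 1\<bar>^3 = std_normal_density x * (\<alpha> * exp (\<beta> * x) - 1)^3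
     - 2 * (indicator {..c} x * (std_normal_density x * (\<alpha> * exp (\<beta> * x) - 1)^3))" for x
  proof (cases "x \<le> c")
    case True
    have "x / \<sigma> \<le> c / \<sigma>" using True s by (simp add: divide_right_mono)
    then have "x/\<sigma> - 1/(2*\<sigma>\<^sup>2) \<le> 0" using s by (simp add: c_def power2_eq_square)
    then have "gg \<sigma> x \<le> 1" unfolding gg_def by simp
    then have "(\<bar>gg \<sigma> x - 1\<bar>)^3 = -((gg \<sigma> x - 1)^3)" by (simp add: abs_if power3_eq_cube algebra_simps)
    then show ?thesis using True by (simp add: g indicator_def)
  next
    case False
    have "c / \<sigma> < x / \<sigma>" using False s by (simp add: divide_strict_right_mono)
    then have "0 < x/\<sigma> - 1/(2*\<sigma>\<^sup>2)" using s by (simp add: c_def power2_eq_square)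
    then have "1 < gg \<sigma> x" unfolding gg_def by simp
    then have "(\<bar>gg \<sigma> x - 1\<bar>)^3 = (gg \<sigma> x - 1)^3" by (simp add: abs_if)
    then show ?thesis using False by (simp add: g indicator_def)
  qed
  have hb: "has_bochner_integral lborel (\<lambda>x. std_normal_density x * \<bar>gg \<sigma> x - 1\<bar>^3)
     ((\<alpha>^3 * exp ((3*\<beta>)\<^sup>2/2) - 3*\<alpha>^2 * exp ((2*\<beta>)\<^sup>2/2) + 3*\<alpha> * exp (\<beta>\<^sup>2/2) - exp (0\<^sup>2/2))
      - 2 * (\<alpha>^3 * (exp ((3*\<beta>)\<^sup>2/2) * Phi (c - 3*\<beta>)) - 3*\<alpha>^2 * (exp ((2*\<beta>)\<^sup>2/2) * Phi (c - 2*\<beta>))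
      + 3*\<alpha> * (exp (\<beta>\<^sup>2/2) * Phi (c - \<beta>)) - exp (0\<^sup>2/2) * Phi (c - 0)))"
    unfolding pw by (intro has_bochner_integral_diff has_bochner_integral_mult_right hb3 hb3t)
  have e3: "\<alpha>^3 * exp ((3*\<beta>)\<^sup>2/2) = exp (3 / \<sigma>\<^sup>2)"
    unfolding \<alpha>_def \<beta>_def using s
    by (simp only: exp_cube exp_add[symmetric]) (simp add: field_simps power2_eq_square)
  have e2: "\<alpha>^2 * exp ((2*\<beta>)\<^sup>2/2) = exp (1 / \<sigma>\<^sup>2)"
    unfolding \<alpha>_def \<beta>_def using s
    by (simp only: exp_sq exp_add[symmetric]) (simp add: field_simps power2_eq_square)
  have e1: "\<alpha> * exp (\<beta>\<^sup>2/2) = 1"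
    unfolding \<alpha>_def \<beta>_def using s
    by (simp only: exp_add[symmetric]) (simp add: field_simps power2_eq_square)
  have p3: "c - 3*\<beta> = - 5 / (2 * \<sigma>)" unfolding c_def \<beta>_def using s by (simp add: field_simps)
  have p2: "c - 2*\<beta> = - 3 / (2 * \<sigma>)" unfolding c_def \<beta>_def using s by (simp add: field_simps)
  have p1: "c - \<beta> = - 1 / (2 * \<sigma>)" unfolding c_def \<beta>_def using s by (simp add: field_simps)
  have p0: "Phi (c - 0) = 1 - Phi (- 1 / (2 * \<sigma>))" unfolding c_def using Phi_sym[of "1/(2*\<sigma>)"] by simp
  have "(\<integral>z. \<bar>z - 1\<bar>^3 \<partial>mu \<sigma>) = (\<integral>x. std_normal_density x * \<bar>gg \<sigma> x - 1\<bar>^3 \<partial>lborel)"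
    by (subst int_mu) simp_all
  also have "\<dots> = (exp (3 / \<sigma>\<^sup>2) - 3 * exp (1 / \<sigma>\<^sup>2) + 3 - 1)
      - 2 * (exp (3 / \<sigma>\<^sup>2) * Phi (- 5 / (2 * \<sigma>)) - 3 * exp (1 / \<sigma>\<^sup>2) * Phi (- 3 / (2 * \<sigma>))
      + 3 * Phi (- 1 / (2 * \<sigma>)) - (1 - Phi (- 1 / (2 * \<sigma>))))"
  proof -
    have e3P: "\<alpha>^3 * (exp ((3*\<beta>)\<^sup>2/2) * P) = exp (3 / \<sigma>\<^sup>2) * P" for P using e3 by (simp add: mult.assoc[symmetric])
    have e2P: "\<alpha>^2 * (exp ((2*\<beta>)\<^sup>2/2) * P) = exp (1 / \<sigma>\<^sup>2) * P" for P using e2 by (simp add: mult.assoc[symmetric])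
    have e1P: "\<alpha> * (exp (\<beta>\<^sup>2/2) * P) = P" for P using e1 by (simp add: mult.assoc[symmetric])
    have e2': "3*\<alpha>^2 * exp ((2*\<beta>)\<^sup>2/2) = 3 * exp (1 / \<sigma>\<^sup>2)" using e2 by (simp add: mult.assoc)
    have e1': "3*\<alpha> * exp (\<beta>\<^sup>2/2) = 3" using e1 by (simp add: mult.assoc)
    have e2P': "3*\<alpha>^2 * (exp ((2*\<beta>)\<^sup>2/2) * P) = 3 * (exp (1 / \<sigma>\<^sup>2) * P)" for P using e2P by (simp add: mult.assoc)
    have e1P': "3*\<alpha> * (exp (\<beta>\<^sup>2/2) * P) = 3 * P" for P using e1P by (simp add: mult.assoc)
    show ?thesis
      using has_bochner_integral_integral_eq[OF hb] unfolding p0 p1 p2 p3 e3P e2P' e1P' e3 e2' e1' 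
      by (simp add: algebra_simps)
  qed
  finally show ?thesis by (simp add: algebra_simps)
qed

lemma mu_r3_int:
  assumes s: "\<sigma> > 0"
  shows "integrable (mu \<sigma>) (\<lambda>z. \<bar>z - 1\<bar>^3)"
proof -
  define \<alpha> where "\<alpha> = exp (-1/(2*\<sigma>\<^sup>2))"
  define \<beta> where "\<beta> = 1/\<sigma>"
  define c where "c = 1/(2*\<sigma>)"
  have g: "gg \<sigma> x = \<alpha> * exp (\<beta> * x)" for x using gg_eq[of \<sigma> x] s by (simp add: \<alpha>_def \<beta>_def)
  have pw: "std_normal_density x * \<bar>gg \<sigma> x - 1\<bar>^3 = std_normal_density x * (\<alpha> * exp (\<beta> * x) - 1)^3
     - 2 * (indicator {..c} x * (std_normal_density x * (\<alpha> * exp (\<beta> * x) - 1)^3))" for x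
  proof (cases "x \<le> c")
    case True
    have "x / \<sigma> \<le> c / \<sigma>" using True s by (simp add: divide_right_mono)
    then have "x/\<sigma> - 1/(2*\<sigma>\<^sup>2) \<le> 0" using s by (simp add: c_def power2_eq_square)
    then have "gg \<sigma> x \<le> 1" unfolding gg_def by simp
    then have "(\<bar>gg \<sigma> x - 1\<bar>)^3 = -((gg \<sigma> x - 1)^3)" by (simp add: abs_if power3_eq_cube algebra_simps)
    then show ?thesis using True by (simp add: g indicator_def)
  next
    case False
    have "c / \<sigma> < x / \<sigma>" using False s by (simp add: divide_strict_right_mono)
    then have "0 < x/\<sigma> - 1/(2*\<sigma>\<^sup>2)" using s by (simp add: c_def power2_eq_square)
    then have "1 < gg \<sigma> x" unfolding gg_def by simp
    then have "(\<bar>gg \<sigma> x - 1\<bar>)^3 = (gg \<sigma> x - 1)^3" by (simp add: abs_if)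
    then show ?thesis using False by (simp add: g indicator_def)
  qed
  have hb: "has_bochner_integral lborel (\<lambda>x. std_normal_density x * \<bar>gg \<sigma> x - 1\<bar>^3)
     ((\<alpha>^3 * exp ((3*\<beta>)\<^sup>2/2) - 3*\<alpha>^2 * exp ((2*\<beta>)\<^sup>2/2) + 3*\<alpha> * exp (\<beta>\<^sup>2/2) - exp (0\<^sup>2/2))
      - 2 * (\<alpha>^3 * (exp ((3*\<beta>)\<^sup>2/2) * Phi (c - 3*\<beta>)) - 3*\<alpha>^2 * (exp ((2*\<beta>)\<^sup>2/2) * Phi (c - 2*\<beta>))
      + 3*\<alpha> * (exp (\<beta>\<^sup>2/2) * Phi (c - \<beta>)) - exp (0\<^sup>2/2) * Phi (c - 0)))"
    unfolding pw by (intro has_bochner_integral_diff has_bochner_integral_mult_right hb3 hb3t)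
  show ?thesis using hbI[OF hb] by (subst int_mu_iff) auto
qed

lemma joint_law:
  assumes M: "prob_space M" and n: "n \<ge> 1"
    and ind: "prob_space.indep_vars M (\<lambda>_. borel) X {1..n}"
    and dist: "\<And>j. j \<in> {1..n} \<Longrightarrow> distributed M lborel (X j) std_normal_density"
  shows "distr M (PiM {..<n} (\<lambda>_. mu \<sigma>)) (\<lambda>\<omega>. \<lambda>i\<in>{..<n}. gg \<sigma> (X (Suc i) \<omega>)) = PiM {..<n} (\<lambda>_. mu \<sigma>)"
proof -
  interpret prob_space M by fact
  have Xm: "X j \<in> measurable M borel" if "j \<in> {1..n}" for j
    using distributed_measurable[OF dist[OF that]] by simp
  have dX: "distr M borel (X j) = density lborel std_normal_density" if "j \<in> {1..n}" for j
  proof -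
    have "distr M borel (X j) = distr M lborel (X j)" by (rule distr_cong) auto
    also have "\<dots> = density lborel std_normal_density" by (rule distributed_distr_eq_density[OF dist[OF that]])
    finally show ?thesis .
  qed
  have dY: "distr M borel (gg \<sigma> \<circ> X j) = mu \<sigma>" if "j \<in> {1..n}" for j
  proof -
    have "distr M borel (gg \<sigma> \<circ> X j) = distr (distr M borel (X j)) borel (gg \<sigma>)"
      by (rule distr_distr[symmetric]) (use Xm[OF that] in auto)
    then show ?thesis by (simp add: dX[OF that] mu_def)
  qed
  have indY: "indep_vars (\<lambda>_. borel) (\<lambda>j. gg \<sigma> \<circ> X j) {1..n}"
    by (rule indep_vars_compose[OF ind]) simp
  have rvY: "random_variable borel (gg \<sigma> \<circ> X j)" if "j \<in> {1..n}" for j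
    using Xm[OF that] by simp
  have "distr M (\<Pi>\<^sub>M i\<in>{1..n}. borel) (\<lambda>x. \<lambda>i\<in>{1..n}. (gg \<sigma> \<circ> X i) x) = (\<Pi>\<^sub>M i\<in>{1..n}. distr M borel (gg \<sigma> \<circ> X i))"
  proof -
    have iff: "indep_vars (\<lambda>_. borel) (\<lambda>j. gg \<sigma> \<circ> X j) {1..n} \<longleftrightarrow>
      distr M (\<Pi>\<^sub>M i\<in>{1..n}. borel) (\<lambda>x. \<lambda>i\<in>{1..n}. (gg \<sigma> \<circ> X i) x) = (\<Pi>\<^sub>M i\<in>{1..n}. distr M borel (gg \<sigma> \<circ> X i))"
      by (rule indep_vars_iff_distr_eq_PiM') (use n rvY in auto)
    show ?thesis using iff[THEN iffD1, OF indY] .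
  qed
  also have "\<dots> = (\<Pi>\<^sub>M i\<in>{1..n}. mu \<sigma>)" by (rule PiM_cong) (auto simp: dY)
  finally have Q1: "distr M (\<Pi>\<^sub>M i\<in>{1..n}. borel) (\<lambda>x. \<lambda>i\<in>{1..n}. gg \<sigma> (X i x)) = (\<Pi>\<^sub>M i\<in>{1..n}. mu \<sigma>)"
    by (simp only: o_def)
  have T1m: "(\<lambda>x. \<lambda>i\<in>{1..n}. gg \<sigma> (X i x)) \<in> measurable M (\<Pi>\<^sub>M i\<in>{1..n}. borel)"
    using Xm by (intro measurable_restrict) auto
  have Rm: "(\<lambda>\<omega>. \<lambda>i\<in>{..<n}. \<omega> (Suc i)) \<in> measurable (\<Pi>\<^sub>M i\<in>{1..n}. borel) (PiM {..<n} (\<lambda>_. mu \<sigma>))"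
  proof -
    have m1: "(\<lambda>\<omega>. \<lambda>i\<in>{..<n}. \<omega> (Suc i)) \<in> measurable (\<Pi>\<^sub>M i\<in>{1..n}. borel) (PiM {..<n} (\<lambda>_. borel))"
      by (intro measurable_restrict measurable_component_singleton) auto
    have se: "sets (PiM {..<n} (\<lambda>_. mu \<sigma>)) = sets (PiM {..<n} (\<lambda>_. borel :: real measure))"
      by (rule sets_PiM_cong) (simp_all add: mu_sets)
    show ?thesis by (subst measurable_cong_sets[OF refl se]) (rule m1)
  qed
  have R: "distr (\<Pi>\<^sub>M i\<in>{1..n}. mu \<sigma>) (PiM {..<n} (\<lambda>_. mu \<sigma>)) (\<lambda>\<omega>. \<lambda>i\<in>{..<n}. \<omega> (Suc i)) = PiM {..<n} (\<lambda>_. mu \<sigma>)"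
    using distr_PiM_reindex[of "{1..n}" "\<lambda>_. mu \<sigma>" Suc "{..<n}"] by (auto simp: mu_prob)
  have "distr M (PiM {..<n} (\<lambda>_. mu \<sigma>)) (\<lambda>\<omega>. \<lambda>i\<in>{..<n}. gg \<sigma> (X (Suc i) \<omega>))
      = distr M (PiM {..<n} (\<lambda>_. mu \<sigma>)) ((\<lambda>\<omega>. \<lambda>i\<in>{..<n}. \<omega> (Suc i)) \<circ> (\<lambda>x. \<lambda>i\<in>{1..n}. gg \<sigma> (X i x)))"
    by (rule distr_cong) (auto simp: fun_eq_iff)
  also have "\<dots> = distr (distr M (\<Pi>\<^sub>M i\<in>{1..n}. borel) (\<lambda>x. \<lambda>i\<in>{1..n}. gg \<sigma> (X i x))) (PiM {..<n} (\<lambda>_. mu \<sigma>)) (\<lambda>\<omega>. \<lambda>i\<in>{..<n}. \<omega> (Suc i))"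
    by (rule distr_distr[symmetric, OF Rm T1m])
  also have "\<dots> = PiM {..<n} (\<lambda>_. mu \<sigma>)" unfolding Q1 R ..
  finally show ?thesis .
qed

lemma strict_bound:
  assumes P: "prob_space P" and Zm: "Z \<in> borel_measurable P"
    and H: "\<And>y. \<bar>measure P {w\<in>space P. Z w \<le> y} - Phi y\<bar> \<le> E"
  shows "\<bar>measure P {w\<in>space P. Z w < x} - Phi x\<bar> \<le> E"
proof -
  interpret prob_space P by fact
  note Zm[measurable]
  have ev1: "{w\<in>space P. Z w \<le> y} \<in> events" for y by measurable
  have ev2: "{w\<in>space P. Z w < y} \<in> events" for y by measurable
  have up: "measure P {w\<in>space P. Z w < x} \<le> measure P {w\<in>space P. Z w \<le> x}"
    by (rule finite_measure_mono) (auto intro: ev1)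
  have lo: "measure P {w\<in>space P. Z w \<le> x - d} \<le> measure P {w\<in>space P. Z w < x}" if "0 < d" for d
    using that by (intro finite_measure_mono) (auto intro: ev2)
  have 1: "measure P {w\<in>space P. Z w < x} - Phi x \<le> E"
    using up H[of x] by linarith
  have 2: "Phi x - measure P {w\<in>space P. Z w < x} \<le> E + d" if "0 < d" for d
    using lo[OF that] H[of "x - d"] Phi_lip[of "x - d" x] that by linarith
  have "Phi x - measure P {w\<in>space P. Z w < x} \<le> E"
    by (rule field_le_epsilon) (use 2 in auto)
  then show ?thesis using 1 by linarith
qed

lemma R_pos:
  assumes s: "\<sigma> > 0"
  shows "0 < (\<integral>z. \<bar>z - 1\<bar>^3 \<partial>mu \<sigma>)"
proof -
  have nn: "0 \<le> (\<integral>z. \<bar>z - 1\<bar>^3 \<partial>mu \<sigma>)" by (rule Bochner_Integration.integral_nonneg) simp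
  have "(\<integral>z. \<bar>z - 1\<bar>^3 \<partial>mu \<sigma>) \<noteq> 0"
  proof
    assume z: "(\<integral>z. \<bar>z - 1\<bar>^3 \<partial>mu \<sigma>) = 0"
    have "AE z in mu \<sigma>. \<bar>z - 1\<bar>^3 = 0"
      using integral_nonneg_eq_0_iff_AE[OF mu_r3_int[OF s]] z by simp
    then have "AE z in mu \<sigma>. (z - 1)\<^sup>2 = 0" by eventually_elim simp
    then have "(\<integral>z. (z - 1)\<^sup>2 \<partial>mu \<sigma>) = 0" by (rule integral_eq_zero_AE)
    moreover have "0 < exp (1/\<sigma>\<^sup>2) - 1" using s by simp
    ultimately show False using mu_var[of \<sigma>] s by simp
  qed
  then show ?thesis using nn by linarith
qed

lemma eps_mono:
  assumes B: "0 \<le> B" and n: "n \<ge> 1" and D: "0 < D"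
    and R: "R \<le> V"
  shows "B * R / (sqrt (real n) * D) \<le> B * V / (sqrt (real n) * D)"
proof -
  have "0 < sqrt (real n) * D" using n D by simp
  then show ?thesis using B R by (intro divide_right_mono mult_left_mono) auto
qed

lemma lin3: "(A::real) \<le> E \<Longrightarrow> 0 \<le> C \<Longrightarrow> G \<le> 1 \<Longrightarrow> A - C + 4 * G \<le> E + 4"
  by linarith

lemma part3:
  assumes s: "\<sigma> > 0" and B: "0 \<le> B" and n: "n \<ge> 1"
  shows "eps_BE B \<sigma> n \<le> B * (exp (3 / (2 * \<sigma>\<^sup>2)) / sqrt (real n)) *
           ((1 + 4 * exp (- 3 / \<sigma>\<^sup>2)) / (1 - exp (- 1 / \<sigma>\<^sup>2)) powr (3 / 2))"
proof -
  define e where "e = exp (1 / \<sigma>\<^sup>2)"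
  define W where "W = 1 - exp (- 1 / \<sigma>\<^sup>2)"
  define q where "q = exp (3 / (2 * \<sigma>\<^sup>2))"
  have e1: "1 < e" unfolding e_def using s by simp
  have W: "0 < W" unfolding W_def using s by simp
  have q: "0 < q" unfolding q_def by simp
  have eW: "e - 1 = e * W" unfolding e_def W_def by (simp add: exp_minus field_simps)
  have epow: "e powr (3/2) = q" unfolding e_def q_def by (simp add: exp_powr_real field_simps)
  have Dq: "(e - 1) powr (3/2) = q * W powr (3/2)"
    unfolding eW using e1 W by (simp add: powr_mult epow)
  have q2: "exp (3 / \<sigma>\<^sup>2) = q^2" unfolding q_def by (simp add: exp_sq field_simps)
  have q2': "exp (- 3 / \<sigma>\<^sup>2) = 1 / q^2" unfolding q2[symmetric] by (simp add: exp_minus field_simps)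
  have WP: "0 < W powr (3/2)" using W by simp
  have R: "(1 - 2 * Phi (- 5 / (2 * \<sigma>))) * exp (3 / \<sigma>\<^sup>2)
      - 3 * (1 - 2 * Phi (- 3 / (2 * \<sigma>))) * exp (1 / \<sigma>\<^sup>2)
      + 4 * (1 - 2 * Phi (- 1 / (2 * \<sigma>))) \<le> exp (3 / \<sigma>\<^sup>2) + 4"
  proof -
    have "(1 - 2 * Phi (- 5 / (2 * \<sigma>))) * exp (3 / \<sigma>\<^sup>2) \<le> exp (3 / \<sigma>\<^sup>2)"
      using Phi_nonneg[of "- 5 / (2 * \<sigma>)"] by (simp add: mult_le_cancel_right1)
    moreover have "0 \<le> 3 * (1 - 2 * Phi (- 3 / (2 * \<sigma>))) * exp (1 / \<sigma>\<^sup>2)"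
      using Phi_neg_le_half[of "3 / (2 * \<sigma>)"] s by simp
    moreover have "1 - 2 * Phi (- 1 / (2 * \<sigma>)) \<le> 1" using Phi_nonneg[of "- 1 / (2 * \<sigma>)"] by simp
    ultimately show ?thesis by (rule lin3)
  qed
  have "eps_BE B \<sigma> n \<le> B * (exp (3 / \<sigma>\<^sup>2) + 4) / (sqrt (real n) * (exp (1 / \<sigma>\<^sup>2) - 1) powr (3 / 2))"
    unfolding eps_BE_def using R B n e1 by (intro eps_mono) (auto simp: e_def)
  also have "\<dots> = B * (q / sqrt (real n)) * ((1 + 4 * (1/q^2)) / W powr (3 / 2))"
    unfolding e_def[symmetric] Dq q2 using q WP n by (simp add: field_simps power2_eq_square)
  finally show ?thesis unfolding q2' by (simp add: q_def W_def)
qed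

lemma part2:
  assumes s: "\<sigma> > 0" and B: "0 \<le> B" and n: "n \<ge> 1"
  shows "eps_BE B \<sigma> n \<le> B * sqrt (8 / pi) * (1 / sqrt (real n)) *
           (1 + (46.115 + 0.375 * exp (1 / \<sigma>\<^sup>2) + 5.625 * exp (3 / \<sigma>\<^sup>2)) / \<sigma>\<^sup>2)"
proof -
  define a where "a = 1 / (2 * \<sigma>)"
  define k where "k = 2 / sqrt (2 * pi)"
  define K where "K = 46.115 + 0.375 * exp (1 / \<sigma>\<^sup>2) + 5.625 * exp (3 / \<sigma>\<^sup>2)"
  define D where "D = (exp (1 / \<sigma>\<^sup>2) - 1) powr (3 / 2)"
  have a: "0 < a" unfolding a_def using s by simp
  have k: "0 < k" unfolding k_def by simp
  have K: "0 < K" unfolding K_def by (intro add_pos_nonneg) auto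
  have a4: "4 * a\<^sup>2 = 1 / \<sigma>\<^sup>2" unfolding a_def using s by (simp add: field_simps power2_eq_square)
  have a5: "- (5 * a) = - 5 / (2 * \<sigma>)" unfolding a_def by simp
  have a3: "- (3 * a) = - 3 / (2 * \<sigma>)" unfolding a_def by simp
  have a1: "- a = - 1 / (2 * \<sigma>)" unfolding a_def by simp
  have a0: "0 \<le> 5*a" "0 \<le> 3*a" "0 \<le> a" using a by auto
  have k': "0 < 2 / sqrt (2 * pi)" by simp
  have a3': "3 * (1 / \<sigma>\<^sup>2) = 3 / \<sigma>\<^sup>2" by simp
  note c2 = core2[OF a k' G_bounds(2)[OF a0(1)] G_bounds(1)[OF a0(2)] G_bounds(2)[OF a0(3)]]
  have N: "(1 - 2 * Phi (- 5 / (2 * \<sigma>))) * exp (3 / \<sigma>\<^sup>2)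
      - 3 * (1 - 2 * Phi (- 3 / (2 * \<sigma>))) * exp (1 / \<sigma>\<^sup>2)
      + 4 * (1 - 2 * Phi (- 1 / (2 * \<sigma>))) \<le> k * (16*a^3*(1 + K * (1/\<sigma>\<^sup>2)))"
    using c2 unfolding a5 a3 a1 a4 a3' k_def[symmetric] K_def[symmetric] .
  have p: "(1/\<sigma>\<^sup>2) powr (3/2) = 8 * a^3"
  proof -
    have e: "(2*a) powr 2 = 1/\<sigma>\<^sup>2" using a4 a by (simp add: power_mult_distrib)
    have "(1/\<sigma>\<^sup>2) powr (3/2) = ((2*a) powr 2) powr (3/2)" by (simp only: e)
    also have "\<dots> = (2*a) powr 3" by (simp add: powr_powr)
    also have "\<dots> = (2*a)^3" using a by simp
    finally show ?thesis by simp
  qed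
  have te: "1/\<sigma>\<^sup>2 \<le> exp (1/\<sigma>\<^sup>2) - 1" using exp_ge_add_one_self[of "1/\<sigma>\<^sup>2"] by linarith
  have tD: "(1/\<sigma>\<^sup>2) powr (3/2) \<le> D" unfolding D_def
    using te by (intro powr_mono2) auto
  have D: "0 < D" unfolding D_def using s by simp
  have sq: "sqrt (8 / pi) = 2 * k"
  proof -
    have "(2 * k)\<^sup>2 = 8 / pi" unfolding k_def by (simp add: power_divide)
    then show ?thesis using k by (intro real_sqrt_unique) auto
  qed
  have "k * (16*a^3*(1 + K * (1/\<sigma>\<^sup>2))) = sqrt (8 / pi) * (1/\<sigma>\<^sup>2) powr (3/2) * (1 + K / \<sigma>\<^sup>2)"
    unfolding sq p by simp
  also have "\<dots> \<le> sqrt (8 / pi) * D * (1 + K / \<sigma>\<^sup>2)"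
    using tD K s by (intro mult_right_mono mult_left_mono) auto
  finally have N2: "(1 - 2 * Phi (- 5 / (2 * \<sigma>))) * exp (3 / \<sigma>\<^sup>2)
      - 3 * (1 - 2 * Phi (- 3 / (2 * \<sigma>))) * exp (1 / \<sigma>\<^sup>2)
      + 4 * (1 - 2 * Phi (- 1 / (2 * \<sigma>))) \<le> sqrt (8 / pi) * D * (1 + K / \<sigma>\<^sup>2)" using N by linarith
  have "eps_BE B \<sigma> n \<le> B * (sqrt (8 / pi) * D * (1 + K / \<sigma>\<^sup>2)) / (sqrt (real n) * D)"
    unfolding eps_BE_def D_def[symmetric] using N2 B n D by (intro eps_mono) auto
  also have "\<dots> = B * sqrt (8 / pi) * (1 / sqrt (real n)) * (1 + K / \<sigma>\<^sup>2)"
    using D n by (simp add: field_simps)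
  finally show ?thesis unfolding K_def .
qed

lemma sum_shift1: "(\<Sum>j=1..n. f j) = (\<Sum>j<n. f (Suc j))"
  using sum.atLeast1_atMost_eq[of f n] by simp

lemma ineq_equiv:
  fixes S h s n :: real
  assumes s: "0 < s" and n: "0 < n"
  shows "(S - n) / (s * sqrt n) < (h - 1) * (sqrt n / s) \<longleftrightarrow> S / n < h"
proof -
  have sn: "0 < sqrt n" using n by simp
  have "(S - n) / (s * sqrt n) < (h - 1) * (sqrt n / s) \<longleftrightarrow> S - n < (h - 1) * (sqrt n / s) * (s * sqrt n)"
    using s sn by (simp add: pos_divide_less_eq)
  also have "(h - 1) * (sqrt n / s) * (s * sqrt n) = (h - 1) * n"
    using s n by (simp add: field_simps)
  also have "S - n < (h - 1) * n \<longleftrightarrow> S < h * n" by (simp add: algebra_simps)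
  also have "\<dots> \<longleftrightarrow> S / n < h" using n by (simp add: pos_divide_less_eq)
  finally show ?thesis .
qed

theorem mainTheorem7:
  fixes M :: "'a measure" and X :: "nat \<Rightarrow> 'a \<Rightarrow> real"
    and \<sigma> B :: real and n :: nat
  assumes "prob_space M"
    and "\<sigma> > 0" and "n \<ge> 1"
    and "prob_space.indep_vars M (\<lambda>_. borel) X {1..n}"
    and "\<And>j. j \<in> {1..n} \<Longrightarrow> distributed M lborel (X j) std_normal_density"
    and "berry_esseen_const B"
  shows "(\<forall>h::real.
           \<bar>prob_space.prob M {\<omega> \<in> space M.
               (\<Sum>j=1..n. exp (X j \<omega> / \<sigma> - 1 / (2 * \<sigma>\<^sup>2))) / real n < h}
            - Phi ((h - 1) * sqrt (real n / (exp (1 / \<sigma>\<^sup>2) - 1)))\<bar> \<le> eps_BE B \<sigma> n)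
       \<and> eps_BE B \<sigma> n \<le> B * sqrt (8 / pi) * (1 / sqrt (real n)) *
           (1 + (46.115 + 0.375 * exp (1 / \<sigma>\<^sup>2) + 5.625 * exp (3 / \<sigma>\<^sup>2)) / \<sigma>\<^sup>2)
       \<and> eps_BE B \<sigma> n \<le> B * (exp (3 / (2 * \<sigma>\<^sup>2)) / sqrt (real n)) *
           ((1 + 4 * exp (- 3 / \<sigma>\<^sup>2)) / (1 - exp (- 1 / \<sigma>\<^sup>2)) powr (3 / 2))"
proof -
  interpret prob_space M by fact
  have s0: "\<sigma> > 0" by fact
  have sne: "\<sigma> \<noteq> 0" using s0 by simp
  have n: "n \<ge> 1" by fact
  define e where "e = exp (1 / \<sigma>\<^sup>2)"
  have e1: "0 < e - 1" unfolding e_def using s0 by simp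
  define s where "s = sqrt (e - 1)"
  have s: "0 < s" unfolding s_def using e1 by simp
  define R where "R = (1 - 2 * Phi (- 5 / (2 * \<sigma>))) * exp (3 / \<sigma>\<^sup>2)
      - 3 * (1 - 2 * Phi (- 3 / (2 * \<sigma>))) * exp (1 / \<sigma>\<^sup>2)
      + 4 * (1 - 2 * Phi (- 1 / (2 * \<sigma>)))"
  define P where "P = PiM {..<n} (\<lambda>_. mu \<sigma>)"
  interpret P: prob_space P unfolding P_def by (intro prob_space_PiM mu_prob)
  define Z where "Z = (\<lambda>\<omega>. (\<Sum>j<n. \<omega> j - 1) / (s * sqrt (real n)))"
  have s3: "s ^ 3 = (e - 1) powr (3/2)"
  proof -
    have "s = (e - 1) powr (1/2)" unfolding s_def using e1 by (simp add: powr_half_sqrt)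
    then have "s ^ 3 = ((e - 1) powr (1/2)) powr 3" using s by simp
    also have "\<dots> = (e - 1) powr (3/2)" by (simp add: powr_powr)
    finally show ?thesis .
  qed
  have epsE: "B * R / (sqrt (real n) * s ^ 3) = eps_BE B \<sigma> n"
    unfolding eps_BE_def R_def s3 e_def ..
  have sdef': "sqrt (exp (1/\<sigma>\<^sup>2) - 1) = s" by (simp add: s_def e_def)
  have BE: "\<bar>measure P {w \<in> space P. Z w \<le> y} - Phi y\<bar> \<le> B * R / (sqrt (real n) * s ^ 3)" for y
  proof -
    have H: "prob_space (mu \<sigma>) \<and> sets (mu \<sigma>) = sets borel \<and> integrable (mu \<sigma>) (\<lambda>z. \<bar>z\<bar> ^ 3) \<and> 1 \<le> n \<and>
       (\<integral>z. (z - (\<integral>y. y \<partial>mu \<sigma>))\<^sup>2 \<partial>mu \<sigma>) > 0 \<longrightarrow>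
       (let m = (\<integral>y. y \<partial>mu \<sigma>);
            s = sqrt (\<integral>z. (z - m)\<^sup>2 \<partial>mu \<sigma>);
            r3 = (\<integral>z. \<bar>z - m\<bar> ^ 3 \<partial>mu \<sigma>);
            P = PiM {..<n} (\<lambda>_. mu \<sigma>)
        in \<forall>x::real.
             \<bar>measure P {\<omega> \<in> space P. (\<Sum>j<n. \<omega> j - m) / (s * sqrt (real n)) \<le> x} - Phi x\<bar>
               \<le> B * r3 / (sqrt (real n) * s ^ 3))"
      using assms(6) unfolding berry_esseen_const_def by blast
    have prem: "prob_space (mu \<sigma>) \<and> sets (mu \<sigma>) = sets borel \<and> integrable (mu \<sigma>) (\<lambda>z. \<bar>z\<bar> ^ 3) \<and> 1 \<le> n \<and>
       (\<integral>z. (z - (\<integral>y. y \<partial>mu \<sigma>))\<^sup>2 \<partial>mu \<sigma>) > 0"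
      using mu_prob mu_sets mu_int3[OF sne] n mu_mean[OF sne] mu_var[OF sne] e1 by (simp add: e_def)
    have "\<forall>x::real.
             \<bar>measure P {\<omega> \<in> space P. Z \<omega> \<le> x} - Phi x\<bar>
               \<le> B * R / (sqrt (real n) * s ^ 3)"
      using H[rule_format, OF prem] unfolding Let_def mu_mean[OF sne] mu_var[OF sne] mu_r3[OF s0]
        sdef' R_def[symmetric] P_def[symmetric] Z_def .
    then show ?thesis by blast
  qed
  have Rpos: "0 < R" using R_pos[OF s0] unfolding mu_r3[OF s0] R_def .
  have B0: "0 \<le> B"
  proof (rule ccontr)
    assume "\<not> 0 \<le> B"
    then have "B * R < 0" using Rpos by (simp add: mult_neg_pos)
    moreover have "0 < sqrt (real n) * s ^ 3" using n s by simp
    ultimately have "B * R / (sqrt (real n) * s ^ 3) < 0" by (simp add: divide_neg_pos)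
    then show False using BE[of 0] by linarith
  qed
  have Xm: "X j \<in> measurable M borel" if "j \<in> {1..n}" for j
    using distributed_measurable[OF assms(5)[OF that]] by simp
  define T where "T = (\<lambda>\<omega>. \<lambda>i\<in>{..<n}. gg \<sigma> (X (Suc i) \<omega>))"
  have law: "distr M P T = P" unfolding T_def P_def by (rule joint_law[OF assms(1) n assms(4) assms(5)])
  have seP: "sets P = sets (PiM {..<n} (\<lambda>_. borel :: real measure))"
    unfolding P_def by (rule sets_PiM_cong) (simp_all add: mu_sets)
  have Tm: "T \<in> measurable M P"
  proof -
    have "T \<in> measurable M (PiM {..<n} (\<lambda>_. borel))"
      unfolding T_def using Xm by (intro measurable_restrict) auto
    then show ?thesis by (subst measurable_cong_sets[OF refl seP])
  qed
  have Zm: "Z \<in> borel_measurable P"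
  proof -
    have "Z \<in> borel_measurable (PiM {..<n} (\<lambda>_. borel :: real measure))"
      unfolding Z_def by measurable
    then show ?thesis by (subst measurable_cong_sets[OF seP refl])
  qed
  have part1: "\<bar>prob {\<omega> \<in> space M. (\<Sum>j=1..n. exp (X j \<omega> / \<sigma> - 1 / (2 * \<sigma>\<^sup>2))) / real n < h}
            - Phi ((h - 1) * sqrt (real n / (exp (1 / \<sigma>\<^sup>2) - 1)))\<bar> \<le> eps_BE B \<sigma> n" for h
  proof -
    define x where "x = (h - 1) * sqrt (real n / (exp (1 / \<sigma>\<^sup>2) - 1))"
    have x': "x = (h - 1) * (sqrt (real n) / s)" unfolding x_def s_def e_def by (simp add: real_sqrt_divide)
    have Sx: "{w \<in> space P. Z w < x} \<in> sets P" using Zm by measurable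
    have ev: "{\<omega> \<in> space M. (\<Sum>j=1..n. exp (X j \<omega> / \<sigma> - 1 / (2 * \<sigma>\<^sup>2))) / real n < h}
        = T -` {w \<in> space P. Z w < x} \<inter> space M"
    proof -
      have key: "Z (T \<omega>) < x \<longleftrightarrow> (\<Sum>j=1..n. exp (X j \<omega> / \<sigma> - 1 / (2 * \<sigma>\<^sup>2))) / real n < h" for \<omega>
      proof -
        have "(\<Sum>j<n. T \<omega> j - 1) = (\<Sum>j<n. gg \<sigma> (X (Suc j) \<omega>) - 1)"
          unfolding T_def by (rule sum.cong) auto
        also have "\<dots> = (\<Sum>j<n. gg \<sigma> (X (Suc j) \<omega>)) - real n" by (simp add: sum_subtractf)
        also have "(\<Sum>j<n. gg \<sigma> (X (Suc j) \<omega>)) = (\<Sum>j=1..n. exp (X j \<omega> / \<sigma> - 1 / (2 * \<sigma>\<^sup>2)))"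
          unfolding sum_shift1 gg_def ..
        finally have "Z (T \<omega>) = ((\<Sum>j=1..n. exp (X j \<omega> / \<sigma> - 1 / (2 * \<sigma>\<^sup>2))) - real n) / (s * sqrt (real n))"
          unfolding Z_def by simp
        then show ?thesis unfolding x' using ineq_equiv[OF s, of "real n"] n by simp
      qed
      show ?thesis using measurable_space[OF Tm] by (auto simp: key)
    qed
    have "prob {\<omega> \<in> space M. (\<Sum>j=1..n. exp (X j \<omega> / \<sigma> - 1 / (2 * \<sigma>\<^sup>2))) / real n < h}
        = measure P {w \<in> space P. Z w < x}"
      unfolding ev using measure_distr[OF Tm Sx] law by simp
    moreover have "\<bar>measure P {w \<in> space P. Z w < x} - Phi x\<bar> \<le> B * R / (sqrt (real n) * s ^ 3)"
      by (rule strict_bound[OF P.prob_space_axioms Zm BE])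
    ultimately show ?thesis unfolding epsE x_def by simp
  qed
  show ?thesis using part1 part2[OF s0 B0 n] part3[OF s0 B0 n] by blast
qed

end
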